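(* Let $K$ be a field, let $r, p$ be nonnegative integers and $s, n, q, m$ positive integers. Suppose there exist an $[p, q, m]$-formula and a $[1, q, m]$-formula over $K$ which are amicable. Then, if an $[r+1, s, n]$-formula exists over $K$, an $[r+p,\; sq,\; nm]$-formula exists over $K$.
   Context: For nonnegative integers $r$ and positive integers $s, n$, a sum-of-squares formula of size $[r,s,n]$ (an $[r,s,n]$-formula) over a field $K$ is an identity $(x_1^2+\cdots+x_r^2)(y_1^2+\cdots+y_s^2) = z_1^2+\cdots+z_n^2$ in the polynomial ring over $K$ in independent indeterminates $x_1,\dots,x_r,y_1,\dots,y_s$, where each $z_k$ is a bilinear form in $X=(x_1,\dots,x_r)$ and $Y=(y_1,\dots,y_s)$ with coefficients in $K$. Writing $Z = (x_1A_1+\cdots+x_rA_r)Y$ with $n\times s$ matrices $A_i$ over $K$, such a formula is the same as a system of $n\times s$ matrices $A_1,\dots,A_r$ over $K$ satisfying the Hurwitz equations: $A_i^{\mathsf T}A_i = 1_s$ for all $i$, and $A_i^{\mathsf T}A_j + A_j^{\mathsf T}A_i = 0$ for all $i\neq j$. A $[p,s,n]$-formula given by $n\times s$ matrices $A_1,\dots,A_p$ and a $[q,s,n]$-formula given by $n\times s$ matrices $B_1,\dots,B_q$ (both systems satisfying the Hurwitz equations) are called amicable if $A_i^{\mathsf T}B_k = B_k^{\mathsf T}A_i$ for every $1\le i\le p$ and $1\le k\le q$. *)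

theory Defs
  imports Main
begin

text \<open>An n x s matrix over K is represented as a function k j giving the entry in
row k < n, column j < s. A system of r such matrices is a function i k j (i < r).\<close>

definition hurwitz_system ::
  "nat \<Rightarrow> nat \<Rightarrow> nat \<Rightarrow> (nat \<Rightarrow> nat \<Rightarrow> nat \<Rightarrow> 'a::field) \<Rightarrow> bool" where
  "hurwitz_system r s n A \<longleftrightarrow>
     (\<forall>i<r. \<forall>j<s. \<forall>l<s. (\<Sum>k<n. A i k j * A i k l) = (if j = l then 1 else 0)) \<and>
     (\<forall>i<r. \<forall>i'<r. i \<noteq> i' \<longrightarrow> (\<forall>j<s. \<forall>l<s.
        (\<Sum>k<n. A i k j * A i' k l) + (\<Sum>k<n. A i' k j * A i k l) = 0))"

definition sos_formula_exists :: "'a::field itself \<Rightarrow> nat \<Rightarrow> nat \<Rightarrow> nat \<Rightarrow> bool" where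
  "sos_formula_exists K r s n \<longleftrightarrow> (\<exists>A :: nat \<Rightarrow> nat \<Rightarrow> nat \<Rightarrow> 'a. hurwitz_system r s n A)"

definition amicable ::
  "nat \<Rightarrow> nat \<Rightarrow> nat \<Rightarrow> nat \<Rightarrow> (nat \<Rightarrow> nat \<Rightarrow> nat \<Rightarrow> 'a::field) \<Rightarrow> (nat \<Rightarrow> nat \<Rightarrow> nat \<Rightarrow> 'a) \<Rightarrow> bool" where
  "amicable p q s n A B \<longleftrightarrow>
     hurwitz_system p s n A \<and> hurwitz_system q s n B \<and>
     (\<forall>i<p. \<forall>k<q. \<forall>j<s. \<forall>l<s.
        (\<Sum>t<n. A i t j * B k t l) = (\<Sum>t<n. B k t j * A i t l))"

end

theory Submission
  imports Defs
begin

lemma sum_div_mod: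
  fixes F :: "nat \<Rightarrow> nat \<Rightarrow> 'b::comm_monoid_add"
  shows "(\<Sum>x<n*m. F (x div m) (x mod m)) = (\<Sum>k<n. \<Sum>t<m. F k t)"
proof (induction n)
  case 0 then show ?case by simp
next
  case (Suc n)
  have "{..<Suc n * m} = {..<n*m} \<union> {n*m..<n*m+m}" by auto
  then have "(\<Sum>x<Suc n*m. F (x div m) (x mod m)) =
     (\<Sum>x<n*m. F (x div m) (x mod m)) + (\<Sum>x\<in>{n*m..<n*m+m}. F (x div m) (x mod m))"
    by (simp add: sum.union_disjoint ivl_disj_int)
  also have "(\<Sum>x\<in>{n*m..<n*m+m}. F (x div m) (x mod m)) = (\<Sum>t<m. F n t)"
  proof -
    have "(\<Sum>x\<in>{n*m..<n*m+m}. F (x div m) (x mod m)) = (\<Sum>t<m. F ((t + n*m) div m) ((t + n*m) mod m))"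
      using sum.shift_bounds_nat_ivl[of "\<lambda>x. F (x div m) (x mod m)" 0 "n*m" m]
      by (simp add: lessThan_atLeast0 add.commute)
    also have "\<dots> = (\<Sum>t<m. F n t)"
      by (rule sum.cong) auto
    finally show ?thesis .
  qed
  finally show ?case using Suc by simp
qed

definition kr :: "(nat \<Rightarrow> nat \<Rightarrow> 'a::field) \<Rightarrow> (nat \<Rightarrow> nat \<Rightarrow> 'a) \<Rightarrow> nat \<Rightarrow> nat \<Rightarrow> nat \<Rightarrow> nat \<Rightarrow> 'a" where
  "kr X Y m q x c = X (x div m) (c div q) * Y (x mod m) (c mod q)"

lemma kr_sum:
  "(\<Sum>x<n*m. kr X Y m q x c * kr X' Y' m q x c') =
   (\<Sum>k<n. X k (c div q) * X' k (c' div q)) * (\<Sum>t<m. Y t (c mod q) * Y' t (c' mod q))"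
proof -
  have "(\<Sum>x<n*m. kr X Y m q x c * kr X' Y' m q x c') =
     (\<Sum>k<n. \<Sum>t<m. (X k (c div q) * X' k (c' div q)) * (Y t (c mod q) * Y' t (c' mod q)))"
    unfolding kr_def
    using sum_div_mod[where F="\<lambda>k t. (X k (c div q) * X' k (c' div q)) * (Y t (c mod q) * Y' t (c' mod q))" and n=n and m=m]
    by (simp add: algebra_simps)
  also have "\<dots> = (\<Sum>k<n. X k (c div q) * X' k (c' div q)) * (\<Sum>t<m. Y t (c mod q) * Y' t (c' mod q))"
    by (simp add: sum_product)
  finally show ?thesis .
qed

lemma idx_eq: "((c::nat) = c') \<longleftrightarrow> (c div q = c' div q \<and> c mod q = c' mod q)"
  by (metis div_mult_mod_eq)

lemma idx_bounds: assumes "(c::nat) < s * q" shows "c div q < s" "c mod q < q"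
  using assms by (auto simp: less_mult_imp_div_less) (metis mod_less_divisor mult_0_right neq0_conv not_less0)

theorem mainTheorem2:
  fixes r p s n q m :: nat
  assumes "s > 0" and "n > 0" and "q > 0" and "m > 0"
    and "\<exists>(A :: nat \<Rightarrow> nat \<Rightarrow> nat \<Rightarrow> 'a::field) B. amicable p 1 q m A B"
    and "sos_formula_exists TYPE('a) (r + 1) s n"
  shows "sos_formula_exists TYPE('a) (r + p) (s * q) (n * m)"
proof -
  obtain A B :: "nat \<Rightarrow> nat \<Rightarrow> nat \<Rightarrow> 'a" where am: "amicable p 1 q m A B" using assms(5) by blast
  obtain C :: "nat \<Rightarrow> nat \<Rightarrow> nat \<Rightarrow> 'a" where hC: "hurwitz_system (r+1) s n C"
    using assms(6) unfolding sos_formula_exists_def by blast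
  have hA: "hurwitz_system p q m A" and hB: "hurwitz_system 1 q m B"
    and amc: "\<And>i j l. i < p \<Longrightarrow> j < q \<Longrightarrow> l < q \<Longrightarrow>
        (\<Sum>t<m. A i t j * B 0 t l) = (\<Sum>t<m. B 0 t j * A i t l)"
    using am unfolding amicable_def by auto
  define X where "X i = (if i < r then C (i+1) else C 0)" for i
  define Y where "Y i = (if i < r then B 0 else A (i - r))" for i
  define E where "E i = kr (X i) (Y i) m q" for i
  have Cd: "\<And>i j l. i < r+1 \<Longrightarrow> j < s \<Longrightarrow> l < s \<Longrightarrow> (\<Sum>k<n. C i k j * C i k l) = (if j = l then 1 else 0)"
    and Co: "\<And>i i' j l. i < r+1 \<Longrightarrow> i' < r+1 \<Longrightarrow> i \<noteq> i' \<Longrightarrow> j < s \<Longrightarrow> l < s \<Longrightarrow>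
        (\<Sum>k<n. C i k j * C i' k l) + (\<Sum>k<n. C i' k j * C i k l) = 0"
    using hC unfolding hurwitz_system_def by auto
  have Ad: "\<And>i j l. i < p \<Longrightarrow> j < q \<Longrightarrow> l < q \<Longrightarrow> (\<Sum>k<m. A i k j * A i k l) = (if j = l then 1 else 0)"
    and Ao: "\<And>i i' j l. i < p \<Longrightarrow> i' < p \<Longrightarrow> i \<noteq> i' \<Longrightarrow> j < q \<Longrightarrow> l < q \<Longrightarrow>
        (\<Sum>k<m. A i k j * A i' k l) + (\<Sum>k<m. A i' k j * A i k l) = 0"
    using hA unfolding hurwitz_system_def by auto
  have Bd: "\<And>j l. j < q \<Longrightarrow> l < q \<Longrightarrow> (\<Sum>k<m. B 0 k j * B 0 k l) = (if j = l then 1 else 0)"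
    using hB unfolding hurwitz_system_def by auto
  have "hurwitz_system (r+p) (s*q) (n*m) E"
    unfolding hurwitz_system_def
  proof (intro conjI allI impI)
    fix i c c' assume i: "i < r + p" and c: "c < s*q" and c': "c' < s*q"
    note b = idx_bounds[OF c] idx_bounds[OF c']
    show "(\<Sum>k<n*m. E i k c * E i k c') = (if c = c' then 1 else 0)"
      unfolding E_def kr_sum
      using i b Cd Ad Bd idx_eq[of c c' q] by (auto simp: X_def Y_def)
  next
    fix i i' c c' assume i: "i < r + p" and i': "i' < r + p" and ne: "i \<noteq> i'"
      and c: "c < s*q" and c': "c' < s*q"
    note b = idx_bounds[OF c] idx_bounds[OF c']
    show "(\<Sum>k<n*m. E i k c * E i' k c') + (\<Sum>k<n*m. E i' k c * E i k c') = 0"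
    proof (cases "i < r"; cases "i' < r")
      assume "i < r" "i' < r"
      then show "?thesis" unfolding E_def kr_sum using Co[of "i+1" "i'+1" "c div q" "c' div q"] ne b
        by (simp add: X_def Y_def Bd mult.commute[of _ "(\<Sum>k<m. B 0 k (c mod q) * B 0 k (c' mod q))"]
             flip: distrib_left)
    next
      assume "\<not> i < r" "\<not> i' < r"
      then show "?thesis" unfolding E_def kr_sum using Ao[of "i-r" "i'-r" "c mod q" "c' mod q"] ne b i i'
        by (simp add: X_def Y_def Cd flip: distrib_left)
    next
      assume "i < r" "\<not> i' < r"
      then show "?thesis" unfolding E_def kr_sum using Co[of "i+1" 0 "c div q" "c' div q"] b i i' amc[of "i'-r" "c mod q" "c' mod q"]
        by (simp add: X_def Y_def flip: distrib_right)
    next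
      assume "\<not> i < r" "i' < r"
      then show "?thesis" unfolding E_def kr_sum using Co[of 0 "i'+1" "c div q" "c' div q"] b i i' amc[of "i-r" "c mod q" "c' mod q"]
        by (simp add: X_def Y_def flip: distrib_right)
    qed
  qed
  then show ?thesis unfolding sos_formula_exists_def by blast
qed

end
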